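(* Consider the one-term Kronecker product model below under the deterministic scheme, along a sequence of models with $M+N\to\infty$. Suppose that (Assumption 1) $\frac{m_0+n_0}{\ln\ln(MN)}\to\infty$ and $\frac{m_0^\dagger+n_0^\dagger}{\ln\ln(MN)}\to\infty$, where $m_0^\dagger=M-m_0$, $n_0^\dagger=N-n_0$, and that (Assumption 2) $\bm E$ has i.i.d. standard normal entries. Let $\hat\lambda,\hat{\bm A},\hat{\bm B}$ be the estimators computed under the true configuration $(m_0,n_0)$ (with the sign of the leading singular pair chosen so that $\langle \mathrm{vec}(\hat{\bm A}),\mathrm{vec}(\bm A)\rangle\ge 0$). Then $$\frac{\hat\lambda-\lambda}{\lambda}=O_p\Big(\frac{r_0}{\lambda/\sigma}\Big),\qquad \|\hat{\bm A}-\bm A\|_F^2=O_p\Big(\frac{r_0}{\lambda/\sigma}\Big),\qquad \|\hat{\bm B}-\bm B\|_F^2=O_p\Big(\frac{r_0}{\lambda/\sigma}\Big),$$ where $r_0=2^{-(m_0+n_0)/2}+2^{-(m_0^\dagger+n_0^\dagger)/2}$.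
   Context: Model: $M,N$ are nonnegative integers and the observed $2^M\times 2^N$ matrix is $\bm Y=\lambda\bm A\otimes\bm B+\sigma 2^{-(M+N)/2}\bm E$, where $\lambda>0$, $\sigma>0$, $\bm A$ is $2^{m_0}\times 2^{n_0}$, $\bm B$ is $2^{M-m_0}\times 2^{N-n_0}$, $\|\bm A\|_F=\|\bm B\|_F=1$, and $\bm E$ is a $2^M\times 2^N$ noise matrix. The pair $(m_0,n_0)$ is the true configuration. Deterministic scheme: $\lambda,\bm A,\bm B$ are non-random. All quantities ($M,N,m_0,n_0,\lambda,\sigma,\bm A,\bm B$) may depend on the index of the sequence; $O_p$ is with respect to this sequence. Vectorization: for a $p\times q$ matrix $\bm C=(c_{ij})$, $\mathrm{vec}(\bm C)=(c_{11},\dots,c_{1q},\dots,c_{p1},\dots,c_{pq})'$ (rows stacked); $\mathrm{vec}^{-1}$ is its inverse for the appropriate dimensions. Rearrangement: for a $2^a\times 2^b$ matrix $\bm C$ and integers $0\le m\le a$, $0\le n\le b$, view $\bm C$ as a $2^m\times 2^n$ array of blocks $\bm C_{i,j}$ of size $2^{a-m}\times 2^{b-n}$; $\mathcal R_{m,n}[\bm C]$ is the $2^{m+n}\times 2^{a+b-m-n}$ matrix whose rows are, in order, $\mathrm{vec}(\bm C_{1,1})',\dots,\mathrm{vec}(\bm C_{1,2^n})',\dots,\mathrm{vec}(\bm C_{2^m,1})',\dots,\mathrm{vec}(\bm C_{2^m,2^n})'$. It satisfies $\mathcal R_{m,n}[\bm A\otimes\bm B]=\mathrm{vec}(\bm A)\mathrm{vec}(\bm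 B)'$ when $\bm A$ is $2^m\times 2^n$. Estimators under configuration $(m,n)$: let $u_1,v_1$ be the leading left/right singular vectors of $\mathcal R_{m,n}[\bm Y]$; $\hat\lambda=\|\mathcal R_{m,n}[\bm Y]\|_S$ (largest singular value), $\hat{\bm A}=\mathrm{vec}^{-1}(u_1)$ ($2^m\times 2^n$), $\hat{\bm B}=\mathrm{vec}^{-1}(v_1)$ ($2^{M-m}\times 2^{N-n}$). *)

theory Defs
  imports "HOL-Probability.Probability"
begin

text \<open>Matrices of varying (power-of-two) size are represented as functions
  nat => nat => real, with 0-based row/column indices; only entries inside the
  stated dimensions are meaningful.\<close>

type_synonym rmat = "nat \<Rightarrow> nat \<Rightarrow> real"
type_synonym rvec = "nat \<Rightarrow> real"

definition frob :: "nat \<Rightarrow> nat \<Rightarrow> rmat \<Rightarrow> real" where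
  "frob p q C = sqrt (\<Sum>i<p. \<Sum>j<q. (C i j)\<^sup>2)"

definition vnorm :: "nat \<Rightarrow> rvec \<Rightarrow> real" where
  "vnorm p x = sqrt (\<Sum>i<p. (x i)\<^sup>2)"

definition vinner :: "nat \<Rightarrow> rvec \<Rightarrow> rvec \<Rightarrow> real" where
  "vinner p x y = (\<Sum>i<p. x i * y i)"

definition kron :: "nat \<Rightarrow> nat \<Rightarrow> rmat \<Rightarrow> rmat \<Rightarrow> rmat" where
  "kron r s A B = (\<lambda>i j. A (i div r) (j div s) * B (i mod r) (j mod s))"

text \<open>Row-stacking vectorisation of a matrix with q columns, and its inverse.\<close>
definition vec :: "nat \<Rightarrow> rmat \<Rightarrow> rvec" where
  "vec q C = (\<lambda>k. C (k div q) (k mod q))"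

definition unvec :: "nat \<Rightarrow> rvec \<Rightarrow> rmat" where
  "unvec q x = (\<lambda>i j. x (i * q + j))"

text \<open>Rearrangement R_{m,n}[C] of a 2^a x 2^b matrix C: row (i1,j1) (index i1*2^n+j1)
  is vec of the block C_{i1,j1} of size 2^(a-m) x 2^(b-n).\<close>
definition rearr :: "nat \<Rightarrow> nat \<Rightarrow> nat \<Rightarrow> nat \<Rightarrow> rmat \<Rightarrow> rmat" where
  "rearr a b m n C = (\<lambda>r c.
      C ((r div 2^n) * 2^(a-m) + c div 2^(b-n)) ((r mod 2^n) * 2^(b-n) + c mod 2^(b-n)))"

definition mulv :: "nat \<Rightarrow> rmat \<Rightarrow> rvec \<Rightarrow> rvec" where
  "mulv q C x = (\<lambda>i. \<Sum>j<q. C i j * x j)"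

definition tmulv :: "nat \<Rightarrow> rmat \<Rightarrow> rvec \<Rightarrow> rvec" where
  "tmulv p C u = (\<lambda>j. \<Sum>i<p. C i j * u i)"

definition spec_norm :: "nat \<Rightarrow> nat \<Rightarrow> rmat \<Rightarrow> real" where
  "spec_norm p q C = Sup {vnorm p (mulv q C x) | x. vnorm q x = 1}"

definition leading_sv_pair :: "nat \<Rightarrow> nat \<Rightarrow> rmat \<Rightarrow> rvec \<Rightarrow> rvec \<Rightarrow> bool" where
  "leading_sv_pair p q C u v \<longleftrightarrow>
     vnorm p u = 1 \<and> vnorm q v = 1 \<and>
     (\<forall>i<p. mulv q C v i = spec_norm p q C * u i) \<and>
     (\<forall>j<q. tmulv p C u j = spec_norm p q C * v j)"

text \<open>Stochastic boundedness X_k = O_p(a_k) (outer-probability form, so that no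
  measurability of X is needed).\<close>
definition bigOp :: "'a measure \<Rightarrow> (nat \<Rightarrow> 'a \<Rightarrow> real) \<Rightarrow> (nat \<Rightarrow> real) \<Rightarrow> bool" where
  "bigOp P X a \<longleftrightarrow> (\<forall>\<epsilon>>0. \<exists>C K. \<forall>k\<ge>K. \<exists>S\<in>sets P.
      measure P S \<ge> 1 - \<epsilon> \<and> (\<forall>\<omega>\<in>S. \<bar>X k \<omega>\<bar> \<le> C * a k))"

end

theory Submission
  imports Defs
begin


definition bil :: "nat \<Rightarrow> nat \<Rightarrow> rmat \<Rightarrow> rvec \<Rightarrow> rvec \<Rightarrow> real" where
  "bil p q C x w = (\<Sum>r<p. \<Sum>c<q. x r * C r c * w c)"

lemma vnorm_L2: "vnorm p x = L2_set x {..<p}"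
  by (simp add: vnorm_def L2_set_def)

lemma vnorm_nonneg: "vnorm p x \<ge> 0"
  by (simp add: vnorm_def sum_nonneg)

lemma vnorm_sq: "(vnorm p x)\<^sup>2 = (\<Sum>i<p. (x i)\<^sup>2)"
  by (simp add: vnorm_def sum_nonneg)

lemma vinner_CS: "\<bar>vinner p x y\<bar> \<le> vnorm p x * vnorm p y"
proof -
  have "\<bar>vinner p x y\<bar> \<le> (\<Sum>i<p. \<bar>x i * y i\<bar>)"
    unfolding vinner_def by (rule sum_abs)
  also have "\<dots> = (\<Sum>i<p. \<bar>x i\<bar> * \<bar>y i\<bar>)" by (simp add: abs_mult)
  also have "\<dots> \<le> vnorm p x * vnorm p y"
    unfolding vnorm_L2 by (rule L2_set_mult_ineq)
  finally show ?thesis .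
qed

lemma coord_le_vnorm: "i < p \<Longrightarrow> \<bar>x i\<bar> \<le> vnorm p x"
proof -
  assume i: "i < p"
  have "(x i)\<^sup>2 \<le> (\<Sum>j<p. (x j)\<^sup>2)"
    using i by (intro member_le_sum) auto
  then have "sqrt ((x i)\<^sup>2) \<le> vnorm p x" unfolding vnorm_def by (rule real_sqrt_le_mono)
  then show ?thesis by simp
qed

lemma vnorm_zero: "vnorm p x = 0 \<Longrightarrow> i < p \<Longrightarrow> x i = 0"
  using coord_le_vnorm[of i p x] by simp

lemma bil_zero_left: "vnorm p x = 0 \<Longrightarrow> bil p q C x w = 0"
  unfolding bil_def by (auto intro!: sum.neutral dest: vnorm_zero)

lemma bil_zero_right: "vnorm q w = 0 \<Longrightarrow> bil p q C x w = 0"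
  unfolding bil_def by (auto intro!: sum.neutral dest: vnorm_zero)

lemma bil_diff_left: "bil p q C (\<lambda>i. x i - y i) w = bil p q C x w - bil p q C y w"
  unfolding bil_def by (simp add: sum_subtractf right_diff_distrib left_diff_distrib)

lemma bil_diff_right: "bil p q C x (\<lambda>i. w i - z i) = bil p q C x w - bil p q C x z"
  unfolding bil_def by (simp add: sum_subtractf right_diff_distrib left_diff_distrib)

lemma bil_scale_left: "bil p q C (\<lambda>i. a * x i) w = a * bil p q C x w"
  unfolding bil_def by (simp add: algebra_simps sum_distrib_left)

lemma bil_scale_right: "bil p q C x (\<lambda>i. a * w i) = a * bil p q C x w"
  unfolding bil_def by (simp add: algebra_simps sum_distrib_left)

lemma vnorm_scale: "vnorm p (\<lambda>i. a * x i) = \<bar>a\<bar> * vnorm p x"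
  unfolding vnorm_def by (simp add: power_mult_distrib sum_distrib_left[symmetric] real_sqrt_mult)

lemma bil_abs_bound:
  assumes "vnorm p x \<le> 1" "vnorm q w \<le> 1"
  shows "\<bar>bil p q C x w\<bar> \<le> (\<Sum>r<p. \<Sum>c<q. \<bar>C r c\<bar>)"
  unfolding bil_def
proof (rule order_trans[OF sum_abs], rule sum_mono)
  fix r assume r: "r \<in> {..<p}"
  show "\<bar>\<Sum>c<q. x r * C r c * w c\<bar> \<le> (\<Sum>c<q. \<bar>C r c\<bar>)"
  proof (rule order_trans[OF sum_abs], rule sum_mono)
    fix c assume c: "c \<in> {..<q}"
    have "\<bar>x r\<bar> \<le> 1" using coord_le_vnorm[of r p x] r assms by auto
    moreover have "\<bar>w c\<bar> \<le> 1" using coord_le_vnorm[of c q w] c assms by auto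
    ultimately show "\<bar>x r * C r c * w c\<bar> \<le> \<bar>C r c\<bar>"
    proof -
      have "\<bar>x r\<bar> * \<bar>C r c\<bar> * \<bar>w c\<bar> \<le> 1 * \<bar>C r c\<bar> * 1"
        using \<open>\<bar>x r\<bar> \<le> 1\<close> \<open>\<bar>w c\<bar> \<le> 1\<close> by (intro mult_mono) auto
      then show ?thesis by (simp add: abs_mult)
    qed
  qed
qed

lemma sq_diff_sum: "(\<Sum>i<p. (x i - y i)\<^sup>2) = (vnorm p x)\<^sup>2 - 2 * vinner p x y + (vnorm p y)\<^sup>2"
  unfolding vnorm_sq vinner_def
  by (simp add: power2_diff sum.distrib sum_subtractf sum_distrib_left mult.assoc)

lemma vinner_self: "vinner p x x = (vnorm p x)\<^sup>2"
  unfolding vnorm_sq vinner_def by (simp add: power2_eq_square)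

lemma vinner_comm: "vinner p x y = vinner p y x"
  unfolding vinner_def by (simp add: mult.commute)

lemma mulv_bound:
  assumes "vnorm q x = 1"
  shows "vnorm p (mulv q C x) \<le> (\<Sum>i<p. \<Sum>j<q. \<bar>C i j\<bar>)"
proof -
  have "vnorm p (mulv q C x) \<le> (\<Sum>i<p. \<bar>mulv q C x i\<bar>)"
    unfolding vnorm_L2 by (rule L2_set_le_sum_abs)
  also have "\<dots> \<le> (\<Sum>i<p. \<Sum>j<q. \<bar>C i j\<bar>)"
  proof (rule sum_mono)
    fix i assume "i \<in> {..<p}"
    show "\<bar>mulv q C x i\<bar> \<le> (\<Sum>j<q. \<bar>C i j\<bar>)"
      unfolding mulv_def
    proof (rule order_trans[OF sum_abs], rule sum_mono)
      fix j assume j: "j \<in> {..<q}"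
      have "\<bar>x j\<bar> \<le> 1" using coord_le_vnorm[of j q x] j assms by auto
      then have "\<bar>C i j\<bar> * \<bar>x j\<bar> \<le> \<bar>C i j\<bar> * 1" by (intro mult_left_mono) auto
      then show "\<bar>C i j * x j\<bar> \<le> \<bar>C i j\<bar>" by (simp add: abs_mult)
    qed
  qed
  finally show ?thesis .
qed

lemma spec_norm_ge:
  assumes "vnorm q x = 1"
  shows "vnorm p (mulv q C x) \<le> spec_norm p q C"
  unfolding spec_norm_def
proof (rule cSup_upper)
  show "vnorm p (mulv q C x) \<in> {vnorm p (mulv q C x) |x. vnorm q x = 1}" using assms by blast
  show "bdd_above {vnorm p (mulv q C x) |x. vnorm q x = 1}"
    using mulv_bound by (auto intro!: bdd_aboveI[where M="\<Sum>i<p. \<Sum>j<q. \<bar>C i j\<bar>"])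
qed

lemma bil_mulv: "bil p q C x w = vinner p x (mulv q C w)"
  unfolding bil_def vinner_def mulv_def by (simp add: sum_distrib_left mult.assoc)

lemma bil_rank1:
  assumes R: "\<forall>r<p. \<forall>c<q. R r c = lam * a r * b c + Z r c"
  shows "bil p q R x w = lam * vinner p x a * vinner q b w + bil p q Z x w"
proof -
  have "bil p q R x w = (\<Sum>r<p. \<Sum>c<q. (lam * (x r * a r)) * (b c * w c) + x r * Z r c * w c)"
    unfolding bil_def using R by (intro sum.cong refl) (simp add: algebra_simps)
  also have "\<dots> = (\<Sum>r<p. \<Sum>c<q. (lam * (x r * a r)) * (b c * w c)) + bil p q Z x w"
    unfolding bil_def by (simp add: sum.distrib)
  also have "(\<Sum>r<p. \<Sum>c<q. (lam * (x r * a r)) * (b c * w c)) = (\<Sum>r<p. lam * (x r * a r)) * (\<Sum>c<q. b c * w c)"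
    by (rule sum_product[symmetric])
  also have "\<dots> = lam * vinner p x a * vinner q b w"
    unfolding vinner_def by (simp add: sum_distrib_left)
  finally show ?thesis .
qed

lemma perturb:
  fixes R Z :: rmat and a b u v :: rvec
  assumes R: "\<forall>r<p. \<forall>c<q. R r c = lam * a r * b c + Z r c"
    and a: "vnorm p a = 1" and b: "vnorm q b = 1"
    and Zb: "\<And>x w. \<bar>bil p q Z x w\<bar> \<le> z * vnorm p x * vnorm q w"
    and lead: "leading_sv_pair p q R u v"
    and sgn: "vinner p u a \<ge> 0"
    and lam: "lam > 0"
  shows "\<bar>spec_norm p q R - lam\<bar> \<le> z"
    "(\<Sum>i<p. (u i - a i)\<^sup>2) \<le> 8 * z / lam"
    "(\<Sum>j<q. (v j - b j)\<^sup>2) \<le> 8 * z / lam"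
proof -
  define s where "s = spec_norm p q R"
  have u1: "vnorm p u = 1" and v1: "vnorm q v = 1"
    and Rv: "\<forall>i<p. mulv q R v i = s * u i" using lead by (auto simp: leading_sv_pair_def s_def)
  have z0: "z \<ge> 0" using Zb[of a b] a b by simp
  have "bil p q R u v = vinner p u (\<lambda>i. s * u i)"
    unfolding bil_mulv vinner_def using Rv by (intro sum.cong) auto
  also have "\<dots> = s * vinner p u u" unfolding vinner_def by (simp add: sum_distrib_left algebra_simps)
  finally have h1: "bil p q R u v = s" using u1 by (simp add: vinner_self)
  have "bil p q R a b \<le> vnorm p a * vnorm p (mulv q R b)"
    unfolding bil_mulv using vinner_CS[of p a "mulv q R b"] by simp
  also have "\<dots> \<le> s" using spec_norm_ge[of q b p R, OF b] a by (simp add: s_def)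
  finally have h2: "bil p q R a b \<le> s" .
  have ba: "bil p q R a b = lam + bil p q Z a b"
    using bil_rank1[OF R, of a b] a b by (simp add: vinner_self)
  have "\<bar>bil p q Z a b\<bar> \<le> z" using Zb[of a b] a b by simp
  then have lo: "s \<ge> lam - z" using h2 ba by linarith
  define ua where "ua = vinner p u a"
  define bv where "bv = vinner q b v"
  have su: "s = lam * ua * bv + bil p q Z u v"
    using bil_rank1[OF R, of u v] h1 by (simp add: ua_def bv_def)
  have su': "s = lam * (ua * bv) + bil p q Z u v" using su by (simp add: mult.assoc)
  have Zuv: "\<bar>bil p q Z u v\<bar> \<le> z" using Zb[of u v] u1 v1 by simp
  have ua1: "\<bar>ua\<bar> \<le> 1" using vinner_CS[of p u a] u1 a by (simp add: ua_def)
  have bv1: "\<bar>bv\<bar> \<le> 1" using vinner_CS[of q b v] v1 b by (simp add: bv_def)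
  have ua0: "ua \<ge> 0" using sgn by (simp add: ua_def)
  have "\<bar>ua\<bar> * \<bar>bv\<bar> \<le> 1 * 1" using ua1 bv1 by (intro mult_mono) auto
  then have "\<bar>ua * bv\<bar> \<le> 1" by (simp add: abs_mult)
  then have "ua * bv \<le> 1" by (rule abs_le_D1)
  then have "lam * (ua * bv) \<le> lam * 1" using lam by (intro mult_left_mono) auto
  then have "lam * (ua * bv) \<le> lam" by simp
  then have "s \<le> lam + z" using su' Zuv by linarith
  then show "\<bar>spec_norm p q R - lam\<bar> \<le> z" using lo by (simp add: s_def abs_le_iff)
  have key: "lam * (ua * bv) \<ge> lam - 2 * z" using su' Zuv lo by linarith
  then have "ua * bv \<ge> (lam - 2 * z) / lam" using lam by (simp add: divide_le_eq mult.commute)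
  moreover have "(lam - 2 * z) / lam = 1 - 2 * z / lam" using lam by (simp add: diff_divide_distrib)
  ultimately have key2: "ua * bv \<ge> 1 - 2 * z / lam" by simp
  have eA: "(\<Sum>i<p. (u i - a i)\<^sup>2) = 2 - 2 * ua"
    using sq_diff_sum[where p=p and x=u and y=a] u1 a by (simp add: ua_def)
  have eB: "(\<Sum>j<q. (v j - b j)\<^sup>2) = 2 - 2 * bv"
    using sq_diff_sum[where p=q and x=v and y=b] v1 b by (simp add: bv_def vinner_comm)
  define t where "t = z / lam"
  have zl: "t \<ge> 0" using z0 lam by (simp add: t_def)
  have e2: "2 * z / lam = 2 * t" "8 * z / lam = 8 * t"
    by (simp_all add: t_def)
  have k2: "ua * bv \<ge> 1 - 2 * t" using key2 e2 by simp
  have "bv \<le> 1" using bv1 by (rule abs_le_D1)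
  then have "ua * bv \<le> ua * 1" using ua0 by (intro mult_left_mono) auto
  then have "ua \<ge> ua * bv" by simp
  then have "2 - 2 * ua \<le> 8 * t" using k2 zl by simp
  then show "(\<Sum>i<p. (u i - a i)\<^sup>2) \<le> 8 * z / lam" unfolding eA e2 .
  have "2 - 2 * bv \<le> 8 * t"
  proof (cases "bv \<ge> 0")
    case True
    have "ua \<le> 1" using ua1 by (rule abs_le_D1)
    then have "ua * bv \<le> 1 * bv" using True by (intro mult_right_mono) auto
    then have "ua * bv \<le> bv" by simp
    then show ?thesis using k2 zl by simp
  next
    case False
    then have "ua * bv \<le> 0" using ua0 by (simp add: mult_nonneg_nonpos)
    then have "t \<ge> 1/2" using k2 by simp
    moreover have "- bv \<le> 1" using abs_le_D2[OF bv1] .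
    ultimately show ?thesis by simp
  qed
  then show "(\<Sum>j<q. (v j - b j)\<^sup>2) \<le> 8 * z / lam" unfolding eB e2 .
qed



definition Kn :: "nat \<Rightarrow> int" where "Kn n = \<lceil>2 * sqrt (real n)\<rceil>"

definition netW :: "nat \<Rightarrow> (nat \<Rightarrow> int) set" where
  "netW n = {w \<in> PiE {..<n} (\<lambda>_. {-2 * Kn n..2 * Kn n}). (\<Sum>i<n. (w i)\<^sup>2) \<le> 4 * (Kn n)\<^sup>2}"

definition netv :: "nat \<Rightarrow> (nat \<Rightarrow> int) \<Rightarrow> rvec" where
  "netv n w = (\<lambda>i. if i < n then of_int (w i) / of_int (Kn n) else 0)"

definition net :: "nat \<Rightarrow> rvec set" where "net n = netv n ` netW n"

lemma Kn_ge: "real_of_int (Kn n) \<ge> 2 * sqrt (real n)"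
  unfolding Kn_def by (rule le_of_int_ceiling)

lemma Kn_le: "real_of_int (Kn n) < 2 * sqrt (real n) + 1"
  unfolding Kn_def using ceiling_correct[of "2 * sqrt (real n)"] by linarith

lemma Kn_sq_ge: "real_of_int (Kn n) ^ 2 \<ge> 4 * real n"
proof -
  have "(2 * sqrt (real n))^2 \<le> real_of_int (Kn n) ^ 2"
    using Kn_ge[of n] by (intro power_mono) auto
  then show ?thesis by (simp add: power_mult_distrib)
qed

lemma Kn_sq_le: "real_of_int (Kn n) ^ 2 \<le> 9 * real n"
proof (cases "n = 0")
  case True then show ?thesis by (simp add: Kn_def)
next
  case False
  then have s1: "sqrt (real n) \<ge> 1" by simp
  have "2 * sqrt (real n) \<ge> 0" by simp
  then have k0: "real_of_int (Kn n) \<ge> 0" using Kn_ge[of n] by linarith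
  have "real_of_int (Kn n) \<le> 3 * sqrt (real n)" using Kn_le[of n] s1 by linarith
  then have "real_of_int (Kn n) ^ 2 \<le> (3 * sqrt (real n))^2" using k0 by (intro power_mono) auto
  then show ?thesis by (simp add: power_mult_distrib)
qed

lemma finite_netW: "finite (netW n)"
proof -
  have "finite (PiE {..<n} (\<lambda>_. {-2 * Kn n..2 * Kn n}))" by (intro finite_PiE) auto
  then show ?thesis unfolding netW_def by simp
qed

lemma finite_net: "finite (net n)"
  unfolding net_def using finite_netW by simp

lemma sum_exp_sq_le: "(\<Sum>z\<in>{-L..L::int}. exp (- real_of_int (z\<^sup>2))) \<le> 4"
proof -
  define g :: "int \<Rightarrow> real" where "g z = (1/2) ^ nat \<bar>z\<bar>" for z
  have le: "exp (- real_of_int (z\<^sup>2)) \<le> g z" for z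
  proof -
    have "exp (- real_of_int (z\<^sup>2)) \<le> exp (- real (nat \<bar>z\<bar>))"
    proof -
      have "real (nat \<bar>z\<bar>) \<le> real_of_int (z\<^sup>2)"
      proof -
        have "\<bar>z\<bar> \<le> z\<^sup>2"
        proof (cases "z = 0")
          case False
          then have "1 \<le> \<bar>z\<bar>" by simp
          then have "\<bar>z\<bar> * 1 \<le> \<bar>z\<bar> * \<bar>z\<bar>" by (intro mult_left_mono) auto
          then show ?thesis by (simp add: power2_eq_square)
        qed simp
        then have "real_of_int \<bar>z\<bar> \<le> real_of_int (z\<^sup>2)" by (simp only: of_int_le_iff)
        moreover have "real (nat \<bar>z\<bar>) = real_of_int \<bar>z\<bar>" by simp
        ultimately show ?thesis by linarith
      qed
      then show ?thesis by simp
    qed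
    also have "\<dots> = exp (-1) ^ nat \<bar>z\<bar>" by (simp add: exp_of_nat_mult[symmetric])
    also have "\<dots> \<le> (1/2) ^ nat \<bar>z\<bar>"
    proof (rule power_mono)
      have "exp 1 \<ge> (2::real)" using exp_ge_add_one_self[of 1] by simp
      then show "exp (-1) \<le> (1/2::real)" by (simp add: exp_minus field_simps)
    qed simp
    finally show ?thesis by (simp add: g_def)
  qed
  have g0: "g z \<ge> 0" for z by (simp add: g_def)
  have "(\<Sum>z\<in>{-L..L}. exp (- real_of_int (z\<^sup>2))) \<le> (\<Sum>z\<in>{-L..L}. g z)"
    by (intro sum_mono le)
  also have "\<dots> \<le> (\<Sum>z\<in>int ` {0..nat L} \<union> uminus ` int ` {0..nat L}. g z)"
  proof (intro sum_mono2 g0)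
    show "finite (int ` {0..nat L} \<union> uminus ` int ` {0..nat L})" by simp
    show "{-L..L} \<subseteq> int ` {0..nat L} \<union> uminus ` int ` {0..nat L}"
    proof
      fix z assume z: "z \<in> {-L..L}"
      show "z \<in> int ` {0..nat L} \<union> uminus ` int ` {0..nat L}"
      proof (cases "z \<ge> 0")
        case True
        then have "z = int (nat z)" "nat z \<in> {0..nat L}" using z by auto
        then show ?thesis by blast
      next
        case False
        then have "z = - int (nat (-z))" "nat (-z) \<in> {0..nat L}" using z by auto
        then show ?thesis by blast
      qed
    qed
  qed
  also have "\<dots> \<le> (\<Sum>z\<in>int ` {0..nat L}. g z) + (\<Sum>z\<in>uminus ` int ` {0..nat L}. g z)"
  proof -
    have "(\<Sum>z\<in>int ` {0..nat L} \<inter> uminus ` int ` {0..nat L}. g z) \<ge> 0" by (intro sum_nonneg g0)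
    then show ?thesis by (subst sum_Un) auto
  qed
  also have "(\<Sum>z\<in>int ` {0..nat L}. g z) = (\<Sum>k\<in>{0..nat L}. (1/2)^k)"
  proof -
    have "(\<Sum>z\<in>int ` {0..nat L}. g z) = (\<Sum>k\<in>{0..nat L}. g (int k))"
      by (rule sum.reindex_cong[where l=int]) (auto simp: inj_on_def)
    then show ?thesis by (simp add: g_def)
  qed
  also have "(\<Sum>z\<in>uminus ` int ` {0..nat L}. g z) = (\<Sum>k\<in>{0..nat L}. (1/2)^k)"
  proof -
    have "(\<Sum>z\<in>uminus ` int ` {0..nat L}. g z) = (\<Sum>k\<in>{0..nat L}. g (- int k))"
      by (rule sum.reindex_cong[where l="\<lambda>k. - int k"]) (auto simp: inj_on_def image_image)
    then show ?thesis by (simp add: g_def)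
  qed
  also have "(\<Sum>k\<in>{0..nat L}. (1/2::real)^k) \<le> 2"
  proof -
    have "(\<Sum>k\<in>{0..nat L}. (1/2::real)^k) = (\<Sum>k<Suc (nat L). (1/2::real)^k)"
      by (intro sum.cong) auto
    also have "\<dots> = 2 - 2 * (1/2)^Suc (nat L)" by (subst geometric_sum) (auto simp: field_simps)
    also have "\<dots> \<le> 2" by simp
    finally show ?thesis .
  qed
  finally show ?thesis by simp
qed

lemma card_netW: "real (card (netW n)) \<le> (4 * exp 36) ^ n"
proof -
  define L where "L = 2 * Kn n"
  define W where "W = PiE {..<n} (\<lambda>_. {-L..L})"
  define h where "h w = exp (36 * real n - (\<Sum>i<n. real_of_int ((w i)\<^sup>2)))" for w :: "nat \<Rightarrow> int"
  have fW: "finite W" unfolding W_def by (intro finite_PiE) auto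
  have sub: "netW n \<subseteq> W" unfolding W_def netW_def L_def by auto
  have h0: "h w \<ge> 0" for w by (simp add: h_def)
  have h1: "h w \<ge> 1" if "w \<in> netW n" for w
  proof -
    have "(\<Sum>i<n. (w i)\<^sup>2) \<le> 4 * (Kn n)\<^sup>2" using that by (simp add: netW_def)
    then have "real_of_int (\<Sum>i<n. (w i)\<^sup>2) \<le> 4 * real_of_int (Kn n) ^ 2"
      by (metis (mono_tags) of_int_le_iff of_int_mult of_int_numeral of_int_power)
    also have "\<dots> \<le> 36 * real n" using Kn_sq_le[of n] by simp
    finally have "(\<Sum>i<n. real_of_int ((w i)\<^sup>2)) \<le> 36 * real n" by simp
    then show ?thesis unfolding h_def by simp
  qed
  have "real (card (netW n)) = (\<Sum>w\<in>netW n. 1)" by simp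
  also have "\<dots> \<le> (\<Sum>w\<in>netW n. h w)" by (intro sum_mono h1)
  also have "\<dots> \<le> (\<Sum>w\<in>W. h w)" by (intro sum_mono2 fW sub h0)
  also have "\<dots> = (\<Sum>w\<in>W. exp (36 * real n) * (\<Prod>i<n. exp (- real_of_int ((w i)\<^sup>2))))"
  proof (intro sum.cong refl)
    fix w :: "nat \<Rightarrow> int"
    have "h w = exp (36 * real n + (\<Sum>i<n. - real_of_int ((w i)\<^sup>2)))"
      unfolding h_def by (simp add: sum_negf)
    also have "\<dots> = exp (36 * real n) * exp (\<Sum>i<n. - real_of_int ((w i)\<^sup>2))" by (rule exp_add)
    also have "exp (\<Sum>i<n. - real_of_int ((w i)\<^sup>2)) = (\<Prod>i<n. exp (- real_of_int ((w i)\<^sup>2)))"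
      by (rule exp_sum) simp
    finally show "h w = exp (36 * real n) * (\<Prod>i<n. exp (- real_of_int ((w i)\<^sup>2)))" .
  qed
  also have "\<dots> = exp (36 * real n) * (\<Sum>w\<in>W. (\<Prod>i<n. exp (- real_of_int ((w i)\<^sup>2))))"
    by (simp add: sum_distrib_left)
  also have "(\<Sum>w\<in>W. (\<Prod>i<n. exp (- real_of_int ((w i)\<^sup>2)))) = (\<Prod>i<n. \<Sum>z\<in>{-L..L}. exp (- real_of_int (z\<^sup>2)))"
    unfolding W_def by (rule prod_sum_PiE[symmetric]) auto
  also have "\<dots> \<le> (\<Prod>i<n. 4)"
  proof (rule prod_mono)
    fix i
    have "(\<Sum>z\<in>{-L..L}. exp (- real_of_int (z\<^sup>2))) \<le> 4" by (rule sum_exp_sq_le)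
    moreover have "0 \<le> (\<Sum>z\<in>{-L..L}. exp (- real_of_int (z\<^sup>2)))" by (intro sum_nonneg) simp
    ultimately show "0 \<le> (\<Sum>z\<in>{-L..L}. exp (- real_of_int (z\<^sup>2))) \<and> (\<Sum>z\<in>{-L..L}. exp (- real_of_int (z\<^sup>2))) \<le> 4" by blast
  qed
  also have "exp (36 * real n) * (\<Prod>i<n. (4::real)) = (4 * exp 36) ^ n"
    by (simp add: power_mult_distrib exp_of_nat_mult[symmetric] mult.commute)
  finally show ?thesis by (simp add: mult_left_mono)
qed

lemma card_net: "real (card (net n)) \<le> (4 * exp 36) ^ n"
  unfolding net_def using card_image_le[OF finite_netW, of "netv n" n] card_netW[of n]
  by (meson of_nat_le_iff order_trans)

lemma vnorm_diff_comm: "vnorm p (\<lambda>i. x i - y i) = vnorm p (\<lambda>i. y i - x i)"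
  unfolding vnorm_def by (simp add: power2_commute)

lemma vnorm_tri: "vnorm p (\<lambda>i. x i + y i) \<le> vnorm p x + vnorm p y"
  unfolding vnorm_L2 by (rule L2_set_triangle_ineq)

lemma net_approx:
  assumes n: "n \<ge> 1" and x: "vnorm n x = 1"
  shows "\<exists>y\<in>net n. vnorm n (\<lambda>i. x i - y i) \<le> 1/4"
proof -
  define K where "K = real_of_int (Kn n)"
  have K2: "K^2 \<ge> 4 * real n" using Kn_sq_ge[of n] by (simp add: K_def)
  have Kpos: "K > 0"
  proof -
    have "sqrt (real n) \<ge> 1" using n by simp
    then show ?thesis using Kn_ge[of n] unfolding K_def by linarith
  qed
  define w where "w = restrict (\<lambda>i. round (K * x i)) {..<n}"
  define y where "y = netv n w"
  have yi: "y i = of_int (round (K * x i)) / K" if "i < n" for i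
    using that by (simp add: y_def netv_def w_def K_def)
  have d: "\<bar>y i - x i\<bar> \<le> 1 / (2 * K)" if "i < n" for i
  proof -
    have "y i - x i = (of_int (round (K * x i)) - K * x i) / K" using yi[OF that] Kpos
      by (simp add: field_simps)
    then have "\<bar>y i - x i\<bar> = \<bar>of_int (round (K * x i)) - K * x i\<bar> / K" using Kpos by simp
    also have "\<dots> \<le> (1/2) / K" using Kpos by (intro divide_right_mono of_int_round_abs_le) auto
    finally show ?thesis by simp
  qed
  have "(\<Sum>i<n. (x i - y i)\<^sup>2) \<le> (\<Sum>i<n. (1 / (2 * K))\<^sup>2)"
  proof (rule sum_mono)
    fix i assume "i \<in> {..<n}"
    then have "\<bar>x i - y i\<bar> \<le> 1 / (2 * K)" using d[of i] by (simp add: abs_minus_commute)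
    then have "\<bar>x i - y i\<bar>\<^sup>2 \<le> (1 / (2 * K))\<^sup>2" by (intro power_mono) auto
    then show "(x i - y i)\<^sup>2 \<le> (1 / (2 * K))\<^sup>2" by simp
  qed
  also have "\<dots> = real n / (4 * K^2)" by (simp add: power2_eq_square field_simps)
  also have "\<dots> \<le> 1/16" using K2 Kpos by (simp add: field_simps)
  finally have s16: "(\<Sum>i<n. (x i - y i)\<^sup>2) \<le> 1/16" .
  have dxy: "vnorm n (\<lambda>i. x i - y i) \<le> 1/4"
  proof -
    have "vnorm n (\<lambda>i. x i - y i) \<le> sqrt (1/16)" unfolding vnorm_def using s16 by (rule real_sqrt_le_mono)
    also have "sqrt (1/16) = (1/4::real)" by (simp add: real_sqrt_divide)
    finally show ?thesis .
  qed
  have "vnorm n y = vnorm n (\<lambda>i. x i + (y i - x i))" by simp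
  also have "\<dots> \<le> vnorm n x + vnorm n (\<lambda>i. y i - x i)" by (rule vnorm_tri)
  also have "\<dots> \<le> 1 + 1/4" using x dxy vnorm_diff_comm[of n x y] by simp
  finally have ny: "vnorm n y \<le> 5/4" by simp
  have wy: "real_of_int (w i) = K * y i" if "i < n" for i
    using that Kpos by (simp add: y_def netv_def K_def w_def)
  have wmem: "w \<in> netW n"
    unfolding netW_def
  proof (intro CollectI conjI)
    show "w \<in> PiE {..<n} (\<lambda>_. {-2 * Kn n..2 * Kn n})"
    proof (rule PiE_I)
      fix i assume i: "i \<in> {..<n}"
      have "\<bar>y i\<bar> \<le> 5/4" using coord_le_vnorm[of i n y] i ny by simp
      then have "K * \<bar>y i\<bar> \<le> K * 2" using Kpos by (intro mult_left_mono) auto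
      then have "\<bar>real_of_int (w i)\<bar> \<le> 2 * K" using wy[of i] i Kpos by (simp add: abs_mult)
      then have "\<bar>w i\<bar> \<le> 2 * Kn n" unfolding K_def by linarith
      then show "w i \<in> {-2 * Kn n..2 * Kn n}" by auto
    next
      fix i assume "i \<notin> {..<n}" then show "w i = undefined" by (simp add: w_def)
    qed
    have "real_of_int (\<Sum>i<n. (w i)\<^sup>2) = (\<Sum>i<n. (K * y i)\<^sup>2)" using wy by simp
    also have "\<dots> = K^2 * (vnorm n y)\<^sup>2" by (simp add: vnorm_sq power_mult_distrib sum_distrib_left)
    also have "\<dots> \<le> K^2 * 4"
    proof (rule mult_left_mono)
      have "(vnorm n y)\<^sup>2 \<le> (5/4)\<^sup>2" using ny vnorm_nonneg[of n y] by (intro power_mono) auto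
      moreover have "(5/4::real)\<^sup>2 \<le> 4" by (simp add: power2_eq_square)
      ultimately show "(vnorm n y)\<^sup>2 \<le> 4" by linarith
    qed simp
    finally have "real_of_int (\<Sum>i<n. (w i)\<^sup>2) \<le> real_of_int (4 * (Kn n)\<^sup>2)" by (simp add: K_def mult.commute)
    then show "(\<Sum>i<n. (w i)\<^sup>2) \<le> 4 * (Kn n)\<^sup>2" by (simp only: of_int_le_iff)
  qed
  show ?thesis using wmem dxy by (auto simp: net_def y_def)
qed

lemma net_norm:
  assumes "y \<in> net n" shows "vnorm n y \<le> 2"
proof -
  obtain w where w: "w \<in> netW n" and y: "y = netv n w" using assms by (auto simp: net_def)
  define K where "K = real_of_int (Kn n)"
  show ?thesis
  proof (cases "n = 0")
    case True then show ?thesis by (simp add: vnorm_def)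
  next
    case False
    have Kpos: "K > 0"
    proof -
      have "sqrt (real n) \<ge> 1" using False by simp
      then show ?thesis using Kn_ge[of n] unfolding K_def by linarith
    qed
    have "(\<Sum>i<n. (w i)\<^sup>2) \<le> 4 * (Kn n)\<^sup>2" using w by (simp add: netW_def)
    then have "real_of_int (\<Sum>i<n. (w i)\<^sup>2) \<le> real_of_int (4 * (Kn n)\<^sup>2)" by (simp only: of_int_le_iff)
    then have s: "(\<Sum>i<n. (real_of_int (w i))\<^sup>2) \<le> 4 * K^2" by (simp add: K_def)
    have "(vnorm n y)\<^sup>2 = (\<Sum>i<n. (real_of_int (w i))\<^sup>2) / K^2"
      by (simp add: vnorm_sq y netv_def K_def power_divide sum_divide_distrib)
    also have "\<dots> \<le> 4" using s Kpos by (simp add: divide_le_eq)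
    finally have "(vnorm n y)\<^sup>2 \<le> 2\<^sup>2" by simp
    then show ?thesis using power2_le_imp_le[of "vnorm n y" 2] by simp
  qed
qed



lemma bil_hom:
  assumes H: "\<And>x w. vnorm p x = 1 \<Longrightarrow> vnorm q w = 1 \<Longrightarrow> \<bar>bil p q G x w\<bar> \<le> \<Gamma>"
  shows "\<bar>bil p q G x w\<bar> \<le> \<Gamma> * vnorm p x * vnorm q w"
proof (cases "vnorm p x = 0 \<or> vnorm q w = 0")
  case True
  then show ?thesis by (auto simp: bil_zero_left bil_zero_right)
next
  case False
  define a where "a = vnorm p x"
  define b where "b = vnorm q w"
  have a0: "a > 0" using False vnorm_nonneg[of p x] by (simp add: a_def)
  have b0: "b > 0" using False vnorm_nonneg[of q w] by (simp add: b_def)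
  define x' where "x' = (\<lambda>i. (1/a) * x i)"
  define w' where "w' = (\<lambda>i. (1/b) * w i)"
  have x'1: "vnorm p x' = 1" unfolding x'_def vnorm_scale using a0 by (simp add: a_def)
  have w'1: "vnorm q w' = 1" unfolding w'_def vnorm_scale using b0 by (simp add: b_def)
  have xx: "x = (\<lambda>i. a * x' i)" using a0 by (simp add: x'_def)
  have ww: "w = (\<lambda>i. b * w' i)" using b0 by (simp add: w'_def)
  have "bil p q G x w = a * b * bil p q G x' w'"
    by (subst xx, subst ww) (simp add: bil_scale_left bil_scale_right)
  then have "\<bar>bil p q G x w\<bar> = a * b * \<bar>bil p q G x' w'\<bar>" using a0 b0 by (simp add: abs_mult)
  also have "\<dots> \<le> a * b * \<Gamma>" using H[OF x'1 w'1] a0 b0 by (intro mult_left_mono) auto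
  finally show ?thesis by (simp add: a_def b_def mult.commute mult.left_commute)
qed

lemma unit_exists: "p \<ge> 1 \<Longrightarrow> vnorm p (\<lambda>i. if i = 0 then 1 else 0) = 1"
proof -
  assume p: "p \<ge> 1"
  have "(\<Sum>i<p. (if i = 0 then 1 else 0 :: real)\<^sup>2) = (\<Sum>i<p. if i = 0 then 1 else 0)"
    by (intro sum.cong) auto
  also have "\<dots> = 1" using p by (simp add: sum.delta)
  finally show ?thesis unfolding vnorm_def by simp
qed

lemma net_bilin:
  assumes p: "p \<ge> 1" and q: "q \<ge> 1"
    and T: "\<And>y z. y \<in> net p \<Longrightarrow> z \<in> net q \<Longrightarrow> \<bar>bil p q G y z\<bar> \<le> T"
  shows "\<bar>bil p q G x w\<bar> \<le> 4 * T * vnorm p x * vnorm q w"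
proof -
  define S where "S = {\<bar>bil p q G x w\<bar> | x w. vnorm p x = 1 \<and> vnorm q w = 1}"
  define \<Gamma> where "\<Gamma> = Sup S"
  have ne: "S \<noteq> {}" unfolding S_def using unit_exists[OF p] unit_exists[OF q] by blast
  have bdd: "bdd_above S" unfolding S_def
    by (rule bdd_aboveI[where M="\<Sum>r<p. \<Sum>c<q. \<bar>G r c\<bar>"]) (auto intro!: bil_abs_bound)
  have G1: "\<bar>bil p q G x w\<bar> \<le> \<Gamma>" if "vnorm p x = 1" "vnorm q w = 1" for x w
    unfolding \<Gamma>_def by (rule cSup_upper[OF _ bdd]) (use that in \<open>auto simp: S_def\<close>)
  have Gh: "\<bar>bil p q G x w\<bar> \<le> \<Gamma> * vnorm p x * vnorm q w" for x w
    by (rule bil_hom) (rule G1)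
  have "\<Gamma> \<le> T + 3/4 * \<Gamma>"
    unfolding \<Gamma>_def
  proof (rule cSup_least[OF ne])
    fix s assume "s \<in> S"
    then obtain x w where s: "s = \<bar>bil p q G x w\<bar>" and x: "vnorm p x = 1" and w: "vnorm q w = 1"
      by (auto simp: S_def)
    obtain y where y: "y \<in> net p" and xy: "vnorm p (\<lambda>i. x i - y i) \<le> 1/4" using net_approx[OF p x] by blast
    obtain z where z: "z \<in> net q" and wz: "vnorm q (\<lambda>i. w i - z i) \<le> 1/4" using net_approx[OF q w] by blast
    have ny: "vnorm p y \<le> 2" using net_norm[OF y] .
    have "bil p q G x w = bil p q G y z + bil p q G (\<lambda>i. x i - y i) w + bil p q G y (\<lambda>i. w i - z i)"
      by (simp add: bil_diff_left bil_diff_right)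
    then have "s \<le> \<bar>bil p q G y z\<bar> + \<bar>bil p q G (\<lambda>i. x i - y i) w\<bar> + \<bar>bil p q G y (\<lambda>i. w i - z i)\<bar>"
      using s by linarith
    moreover have "\<bar>bil p q G y z\<bar> \<le> T" using T[OF y z] .
    moreover have "\<bar>bil p q G (\<lambda>i. x i - y i) w\<bar> \<le> \<Gamma> * (1/4) * 1"
    proof -
      have "\<Gamma> \<ge> 0" using G1[OF x w] by simp
      then have "\<Gamma> * vnorm p (\<lambda>i. x i - y i) * vnorm q w \<le> \<Gamma> * (1/4) * 1"
        using xy w by (intro mult_mono) (auto intro: mult_nonneg_nonneg vnorm_nonneg)
      then show ?thesis using Gh[of "\<lambda>i. x i - y i" w] by linarith
    qed
    moreover have "\<bar>bil p q G y (\<lambda>i. w i - z i)\<bar> \<le> \<Gamma> * 2 * (1/4)"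
    proof -
      have "\<Gamma> \<ge> 0" using G1[OF x w] by simp
      then have "\<Gamma> * vnorm p y * vnorm q (\<lambda>i. w i - z i) \<le> \<Gamma> * 2 * (1/4)"
        using ny wz by (intro mult_mono) (auto intro: mult_nonneg_nonneg vnorm_nonneg)
      then show ?thesis using Gh[of y "\<lambda>i. w i - z i"] by linarith
    qed
    ultimately show "s \<le> T + 3/4 * Sup S" unfolding \<Gamma>_def[symmetric] by linarith
  qed
  then have "\<Gamma> \<le> 4 * T" by (simp add: \<Gamma>_def)
  moreover have "\<Gamma> \<ge> 0" using G1[OF unit_exists[OF p] unit_exists[OF q]] by simp
  ultimately have "\<Gamma> * vnorm p x * vnorm q w \<le> 4 * T * vnorm p x * vnorm q w"
    by (intro mult_right_mono) (auto intro: vnorm_nonneg)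
  then show ?thesis using Gh[of x w] by linarith
qed



lemma moment_bound: "fact (2 * k) / (2 ^ k * fact k) \<le> (real k) ^ k"
proof -
  have d: "fact k dvd (fact (2 * k) :: nat)" by (intro fact_dvd) simp
  have "(fact (2 * k) :: nat) div fact (2 * k - k) \<le> (2 * k) ^ k" by (rule fact_div_fact_le_pow) simp
  then have "(fact (2 * k) :: nat) div fact k \<le> (2 * k) ^ k" by simp
  then have "(fact (2 * k) :: nat) \<le> fact k * (2 * k) ^ k"
    using d by (metis dvd_mult_div_cancel mult_le_mono2)
  then have "real (fact (2 * k)) \<le> real (fact k * (2 * k) ^ k)" by (simp only: of_nat_le_iff)
  then have f: "(fact (2 * k) :: real) \<le> fact k * (2 * real k) ^ k" by simp
  have "fact (2 * k) / (2 ^ k * fact k) \<le> fact k * (2 * real k) ^ k / (2 ^ k * fact k)"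
    using f by (intro divide_right_mono) auto
  also have "\<dots> = (real k) ^ k" by (simp add: power_mult_distrib)
  finally show ?thesis .
qed

lemma std_normal_tail:
  assumes P: "prob_space P"
    and X: "distributed P lborel X (\<lambda>x. ennreal (std_normal_density x))"
    and a: "a > 0"
  shows "measure P {\<omega>\<in>space P. a \<le> \<bar>X \<omega>\<bar>} \<le> (real k) ^ k / a ^ (2 * k)"
proof -
  interpret prob_space P by (rule P)
  define A where "A = {x::real. a \<le> \<bar>x\<bar>}"
  have Am: "A \<in> sets lborel" unfolding A_def by measurable
  have eqset: "X -` A \<inter> space P = {\<omega>\<in>space P. a \<le> \<bar>X \<omega>\<bar>}" by (auto simp: A_def)
  define m :: real where "m = fact (2 * k) / (2 ^ k * fact k)"
  have hb: "has_bochner_integral lborel (\<lambda>x. std_normal_density x * x ^ (2 * k) / a ^ (2 * k)) (m / a ^ (2 * k))"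
    unfolding m_def by (rule has_bochner_integral_divide_zero) (rule std_normal_moment_even)
  have "emeasure P {\<omega>\<in>space P. a \<le> \<bar>X \<omega>\<bar>} = (\<integral>\<^sup>+x. ennreal (std_normal_density x) * indicator A x \<partial>lborel)"
    using distributed_emeasure[OF X Am] eqset by simp
  also have "\<dots> \<le> (\<integral>\<^sup>+x. ennreal (std_normal_density x * x ^ (2 * k) / a ^ (2 * k)) \<partial>lborel)"
  proof (rule nn_integral_mono)
    fix x :: real
    show "ennreal (std_normal_density x) * indicator A x \<le> ennreal (std_normal_density x * x ^ (2 * k) / a ^ (2 * k))"
    proof (cases "x \<in> A")
      case True
      then have "a \<le> \<bar>x\<bar>" by (simp add: A_def)
      then have "a ^ (2 * k) \<le> \<bar>x\<bar> ^ (2 * k)" using a by (intro power_mono) auto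
      also have "\<bar>x\<bar> ^ (2 * k) = x ^ (2 * k)" by (metis power_mult power2_abs)
      finally have "1 \<le> x ^ (2 * k) / a ^ (2 * k)" using a by simp
      then have "std_normal_density x * 1 \<le> std_normal_density x * (x ^ (2 * k) / a ^ (2 * k))"
        by (intro mult_left_mono) (auto simp: normal_density_nonneg)
      then show ?thesis using True by simp
    next
      case False then show ?thesis by simp
    qed
  qed
  also have "\<dots> = ennreal (m / a ^ (2 * k))"
  proof -
    have "(\<integral>\<^sup>+x. ennreal (std_normal_density x * x ^ (2 * k) / a ^ (2 * k)) \<partial>lborel)
          = ennreal (integral\<^sup>L lborel (\<lambda>x. std_normal_density x * x ^ (2 * k) / a ^ (2 * k)))"
    proof (rule nn_integral_eq_integral)
      show "integrable lborel (\<lambda>x. std_normal_density x * x ^ (2 * k) / a ^ (2 * k))"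
        using hb by (rule integrable.intros)
      show "AE x in lborel. 0 \<le> std_normal_density x * x ^ (2 * k) / a ^ (2 * k)"
        using a by (auto simp: power_mult normal_density_nonneg intro!: divide_nonneg_pos)
    qed
    then show ?thesis unfolding has_bochner_integral_integral_eq[OF hb] .
  qed
  finally have "ennreal (measure P {\<omega>\<in>space P. a \<le> \<bar>X \<omega>\<bar>}) \<le> ennreal (m / a ^ (2 * k))"
    by (simp add: emeasure_eq_measure)
  moreover have "m / a ^ (2 * k) \<ge> 0" using a by (simp add: m_def)
  ultimately have "measure P {\<omega>\<in>space P. a \<le> \<bar>X \<omega>\<bar>} \<le> m / a ^ (2 * k)" by simp
  also have "\<dots> \<le> (real k) ^ k / a ^ (2 * k)"
    using moment_bound[of k] a by (intro divide_right_mono) (auto simp: m_def)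
  finally show ?thesis .
qed



lemma lincomb_normal:
  fixes X :: "'i \<Rightarrow> 'w \<Rightarrow> real" and \<phi> :: "'j \<Rightarrow> 'i" and c :: "'j \<Rightarrow> real"
  assumes P: "prob_space P" and fin: "finite J" and inj: "inj_on \<phi> J" and sub: "\<phi> ` J \<subseteq> I"
    and ind: "prob_space.indep_vars P (\<lambda>_. borel) X I"
    and nrm: "\<And>i. i \<in> I \<Longrightarrow> distributed P lborel (X i) (\<lambda>x. ennreal (std_normal_density x))"
    and nz: "\<exists>j\<in>J. c j \<noteq> 0"
  shows "distributed P lborel (\<lambda>\<omega>. \<Sum>j\<in>J. c j * X (\<phi> j) \<omega>)
           (\<lambda>x. ennreal (normal_density 0 (sqrt (\<Sum>j\<in>J. (c j)\<^sup>2)) x))"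
proof -
  interpret prob_space P by (rule P)
  define J' where "J' = {j\<in>J. c j \<noteq> 0}"
  define I' where "I' = \<phi> ` J'"
  define d where "d i = c (inv_into J' \<phi> i)" for i
  have J'J: "J' \<subseteq> J" by (auto simp: J'_def)
  have finJ': "finite J'" using fin J'J by (rule finite_subset[rotated])
  have injJ': "inj_on \<phi> J'" using inj J'J by (rule inj_on_subset)
  have finI': "finite I'" using finJ' by (simp add: I'_def)
  have neI': "I' \<noteq> {}" using nz by (auto simp: I'_def J'_def)
  have I'I: "I' \<subseteq> I" using sub J'J by (auto simp: I'_def)
  have dphi: "d (\<phi> j) = c j" if "j \<in> J'" for j using injJ' that by (simp add: d_def)
  have dnz: "d i \<noteq> 0" if "i \<in> I'" for i using that dphi by (auto simp: I'_def J'_def)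
  have indI': "indep_vars (\<lambda>_. borel) X I'" using ind I'I by (rule indep_vars_subset)
  have ind2: "indep_vars (\<lambda>_. borel) (\<lambda>i \<omega>. (\<lambda>x. d i * x) (X i \<omega>)) I'"
    by (rule indep_vars_compose2[OF indI']) simp
  have dist: "distributed P lborel (\<lambda>\<omega>. d i * X i \<omega>) (\<lambda>x. ennreal (normal_density 0 \<bar>d i\<bar> x))"
    if "i \<in> I'" for i
  proof -
    have "distributed P lborel (\<lambda>\<omega>. 0 + d i * X i \<omega>) (\<lambda>x. ennreal (normal_density (0 + d i * 0) (\<bar>d i\<bar> * 1) x))"
      by (rule normal_density_affine) (use nrm[of i] that I'I dnz[OF that] in auto)
    then show ?thesis by simp
  qed
  have S: "distributed P lborel (\<lambda>\<omega>. \<Sum>i\<in>I'. d i * X i \<omega>)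
      (\<lambda>x. ennreal (normal_density (\<Sum>i\<in>I'. 0) (sqrt (\<Sum>i\<in>I'. \<bar>d i\<bar>\<^sup>2)) x))"
    by (rule sum_indep_normal[OF finI' neI' ind2]) (use dnz dist in auto)
  have e1: "(\<lambda>\<omega>. \<Sum>i\<in>I'. d i * X i \<omega>) = (\<lambda>\<omega>. \<Sum>j\<in>J. c j * X (\<phi> j) \<omega>)"
  proof
    fix \<omega>
    have "(\<Sum>i\<in>I'. d i * X i \<omega>) = (\<Sum>j\<in>J'. d (\<phi> j) * X (\<phi> j) \<omega>)"
      unfolding I'_def using injJ' by (rule sum.reindex[unfolded comp_def])
    also have "\<dots> = (\<Sum>j\<in>J'. c j * X (\<phi> j) \<omega>)" by (intro sum.cong) (auto simp: dphi)
    also have "\<dots> = (\<Sum>j\<in>J. c j * X (\<phi> j) \<omega>)"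
      by (intro sum.mono_neutral_left fin J'J) (auto simp: J'_def)
    finally show "(\<Sum>i\<in>I'. d i * X i \<omega>) = (\<Sum>j\<in>J. c j * X (\<phi> j) \<omega>)" .
  qed
  have e2: "(\<Sum>i\<in>I'. \<bar>d i\<bar>\<^sup>2) = (\<Sum>j\<in>J. (c j)\<^sup>2)"
  proof -
    have "(\<Sum>i\<in>I'. \<bar>d i\<bar>\<^sup>2) = (\<Sum>j\<in>J'. \<bar>d (\<phi> j)\<bar>\<^sup>2)"
      unfolding I'_def using injJ' by (rule sum.reindex[unfolded comp_def])
    also have "\<dots> = (\<Sum>j\<in>J'. (c j)\<^sup>2)" by (intro sum.cong) (auto simp: dphi)
    also have "\<dots> = (\<Sum>j\<in>J. (c j)\<^sup>2)"
      by (intro sum.mono_neutral_left fin J'J) (auto simp: J'_def)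
    finally show ?thesis .
  qed
  show ?thesis using S unfolding e1 e2 by simp
qed



lemma normal_tail:
  assumes P: "prob_space P"
    and X: "distributed P lborel X (\<lambda>x. ennreal (normal_density 0 s x))"
    and s: "0 < s" "s \<le> 4" and T: "T > 0"
  shows "measure P {\<omega>\<in>space P. T \<le> \<bar>X \<omega>\<bar>} \<le> (real k) ^ k / (T / 4) ^ (2 * k)"
proof -
  interpret prob_space P by (rule P)
  have Y: "distributed P lborel (\<lambda>\<omega>. (X \<omega> - 0) / s) (\<lambda>x. ennreal (std_normal_density x))"
    using normal_standard_normal_convert[OF s(1), of X 0] X by simp
  have Ym: "(\<lambda>\<omega>. (X \<omega> - 0) / s) \<in> borel_measurable P"
    using distributed_measurable[OF Y] by simp
  have sub: "{\<omega>\<in>space P. T \<le> \<bar>X \<omega>\<bar>} \<subseteq> {\<omega>\<in>space P. T / 4 \<le> \<bar>(X \<omega> - 0) / s\<bar>}"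
  proof safe
    fix \<omega> assume "T \<le> \<bar>X \<omega>\<bar>"
    have "T / 4 \<le> T / s" using s T by (intro divide_left_mono) auto
    also have "\<dots> \<le> \<bar>X \<omega>\<bar> / s" using s \<open>T \<le> \<bar>X \<omega>\<bar>\<close> by (intro divide_right_mono) auto
    also have "\<dots> = \<bar>(X \<omega> - 0) / s\<bar>" using s by simp
    finally show "T / 4 \<le> \<bar>(X \<omega> - 0) / s\<bar>" .
  qed
  have "measure P {\<omega>\<in>space P. T \<le> \<bar>X \<omega>\<bar>} \<le> measure P {\<omega>\<in>space P. T / 4 \<le> \<bar>(X \<omega> - 0) / s\<bar>}"
    by (rule finite_measure_mono[OF sub]) (use Ym in measurable)
  also have "\<dots> \<le> (real k) ^ k / (T / 4) ^ (2 * k)"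
    by (rule std_normal_tail[OF P Y]) (use T in simp)
  finally show ?thesis .
qed



definition Dconst :: "real \<Rightarrow> real" where
  "Dconst \<epsilon> = sqrt (16 * (4 * exp 36) / min \<epsilon> 1)"

lemma gauss_bilin_event:
  fixes G :: "'w \<Rightarrow> rmat"
  assumes P: "prob_space P" and p: "p \<ge> 1" and q: "q \<ge> 1"
    and Gd: "\<And>x w. vnorm p x * vnorm q w \<noteq> 0 \<Longrightarrow>
       distributed P lborel (\<lambda>\<omega>. bil p q (G \<omega>) x w) (\<lambda>t. ennreal (normal_density 0 (vnorm p x * vnorm q w) t))"
    and e: "\<epsilon> > 0"
  shows "\<exists>S\<in>sets P. measure P S \<ge> 1 - \<epsilon> \<and>
     (\<forall>\<omega>\<in>S. \<forall>x w. \<bar>bil p q (G \<omega>) x w\<bar> \<le> 4 * (Dconst \<epsilon> * sqrt (real (p + q))) * vnorm p x * vnorm q w)"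
proof -
  interpret prob_space P by (rule P)
  define Bc :: real where "Bc = 4 * exp 36"
  define e1 where "e1 = min \<epsilon> 1"
  define k where "k = p + q"
  define T where "T = Dconst \<epsilon> * sqrt (real k)"
  have Bc0: "Bc > 0" by (simp add: Bc_def)
  have e10: "e1 > 0" using e by (simp add: e1_def)
  have e11: "e1 \<le> 1" "e1 \<le> \<epsilon>" by (auto simp: e1_def)
  have k0: "k \<ge> 1" using p by (simp add: k_def)
  have D2: "(Dconst \<epsilon>)\<^sup>2 = 16 * Bc / e1"
    unfolding Dconst_def Bc_def e1_def using e10 by (simp add: e1_def)
  have Dpos: "Dconst \<epsilon> > 0" unfolding Dconst_def using e10 by (simp add: e1_def)
  have Tpos: "T > 0" using Dpos k0 by (simp add: T_def)
  have T2: "(T / 4)\<^sup>2 = Bc * real k / e1"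
    unfolding T_def by (simp add: power_divide power_mult_distrib D2)
  define R where "R = (e1 / Bc) ^ k"
  have R: "(real k) ^ k / (T / 4) ^ (2 * k) = R"
  proof -
    have "(T / 4) ^ (2 * k) = ((T / 4)\<^sup>2) ^ k" by (simp add: power_mult)
    also have "\<dots> = (Bc * real k / e1) ^ k" by (simp only: T2)
    finally have pw: "(T / 4) ^ (2 * k) = (Bc * real k / e1) ^ k" .
    then have "(real k) ^ k / (T / 4) ^ (2 * k) = (real k) ^ k / (Bc * real k / e1) ^ k"
      by simp
    also have "\<dots> = (real k / (Bc * real k / e1)) ^ k" by (rule power_divide[symmetric])
    finally have "(real k) ^ k / (T / 4) ^ (2 * k) = (real k / (Bc * real k / e1)) ^ k" .
    also have "real k / (Bc * real k / e1) = e1 / Bc" using k0 e10 Bc0 by (simp add: field_simps)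
    finally show ?thesis by (simp add: R_def)
  qed
  define N where "N = net p \<times> net q"
  define B where "B yz = {\<omega>\<in>space P. T \<le> \<bar>bil p q (G \<omega>) (fst yz) (snd yz)\<bar>}" for yz
  have finN: "finite N" by (simp add: N_def finite_net)
  have zero_case: "B yz = {}" if "vnorm p (fst yz) * vnorm q (snd yz) = 0" for yz
  proof -
    have "bil p q C (fst yz) (snd yz) = 0" for C
      using that by (auto simp: bil_zero_left bil_zero_right)
    then show ?thesis using Tpos by (auto simp: B_def)
  qed
  have Bm: "B yz \<in> sets P" for yz
  proof (cases "vnorm p (fst yz) * vnorm q (snd yz) = 0")
    case True then show ?thesis using zero_case by simp
  next
    case False
    have "(\<lambda>\<omega>. bil p q (G \<omega>) (fst yz) (snd yz)) \<in> borel_measurable P"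
      using distributed_measurable[OF Gd[OF False]] by simp
    then show ?thesis unfolding B_def by measurable
  qed
  have Bp: "measure P (B yz) \<le> R" if "yz \<in> N" for yz
  proof (cases "vnorm p (fst yz) * vnorm q (snd yz) = 0")
    case True
    have "R \<ge> 0" using e10 Bc0 by (simp add: R_def)
    then show ?thesis using zero_case[OF True] by simp
  next
    case False
    define s where "s = vnorm p (fst yz) * vnorm q (snd yz)"
    have s0: "s > 0" using False vnorm_nonneg[of p "fst yz"] vnorm_nonneg[of q "snd yz"]
      by (simp add: s_def less_le)
    have "s \<le> 2 * 2" unfolding s_def using that net_norm[of "fst yz" p] net_norm[of "snd yz" q]
      vnorm_nonneg[of p "fst yz"] vnorm_nonneg[of q "snd yz"] by (intro mult_mono) (auto simp: N_def)
    then have s4: "s \<le> 4" by simp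
    have "measure P (B yz) \<le> (real k) ^ k / (T / 4) ^ (2 * k)"
      unfolding B_def by (rule normal_tail[OF P _ s0 s4 Tpos]) (use Gd[OF False] in \<open>simp add: s_def\<close>)
    then show ?thesis using R by simp
  qed
  define U where "U = (\<Union>yz\<in>N. B yz)"
  have Um: "U \<in> sets P" unfolding U_def using finN Bm by auto
  have "measure P U \<le> (\<Sum>yz\<in>N. measure P (B yz))"
    unfolding U_def by (rule finite_measure_subadditive_finite[OF finN]) (use Bm in auto)
  also have "\<dots> \<le> (\<Sum>yz\<in>N. R)" by (intro sum_mono Bp)
  also have "\<dots> = real (card N) * R" by simp
  also have "\<dots> \<le> (Bc ^ p * Bc ^ q) * R"
  proof (rule mult_right_mono)
    have "real (card N) = real (card (net p)) * real (card (net q))" by (simp add: N_def card_cartesian_product)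
    also have "\<dots> \<le> Bc ^ p * Bc ^ q"
      using card_net[of p] card_net[of q] by (intro mult_mono) (auto simp: Bc_def)
    finally show "real (card N) \<le> Bc ^ p * Bc ^ q" .
    show "R \<ge> 0" using e10 Bc0 by (simp add: R_def)
  qed
  also have "\<dots> = e1 ^ k" using Bc0 by (simp add: R_def k_def power_add power_divide)
  also have "\<dots> \<le> e1 ^ 1" using e10 e11 k0 by (intro power_decreasing) auto
  also have "\<dots> \<le> \<epsilon>" using e11 by simp
  finally have mU: "measure P U \<le> \<epsilon>" .
  define S where "S = space P - U"
  have Sm: "S \<in> sets P" using Um by (simp add: S_def)
  have mS: "measure P S \<ge> 1 - \<epsilon>" using prob_compl[OF Um] mU by (simp add: S_def)
  have bound: "\<bar>bil p q (G \<omega>) x w\<bar> \<le> 4 * T * vnorm p x * vnorm q w" if "\<omega> \<in> S" for \<omega> x w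
  proof (rule net_bilin[OF p q])
    fix y z assume y: "y \<in> net p" and z: "z \<in> net q"
    then have "(y, z) \<in> N" by (simp add: N_def)
    then have "\<omega> \<notin> B (y, z)" using that by (auto simp: S_def U_def)
    then show "\<bar>bil p q (G \<omega>) y z\<bar> \<le> T" using that by (auto simp: B_def S_def)
  qed
  show ?thesis using Sm mS bound by (auto simp: T_def k_def)
qed



lemma sum_reindex_prod: "(\<Sum>i<(a::nat). \<Sum>j<b. f (i * b + j)) = (\<Sum>k<a * b. (f k :: real))"
proof (induction a)
  case 0 then show ?case by simp
next
  case (Suc a)
  have "(\<Sum>k<Suc a * b. f k) = (\<Sum>k<a * b. f k) + (\<Sum>k\<in>{a * b..<a * b + b}. f k)"
    by (simp add: add.commute sum.atLeastLessThan_concat[symmetric] lessThan_atLeast0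
        sum.atLeastLessThan_concat)
  also have "(\<Sum>k\<in>{a * b..<a * b + b}. f k) = (\<Sum>j<b. f (a * b + j))"
  proof -
    have "(\<Sum>k\<in>{0 + a * b..<b + a * b}. f k) = (\<Sum>j\<in>{0..<b}. f (j + a * b))"
      by (rule sum.shift_bounds_nat_ivl)
    then show ?thesis by (simp add: add.commute lessThan_atLeast0)
  qed
  finally show ?case using Suc by simp
qed

lemma dm: "y < (R::nat) \<Longrightarrow> (x * R + y) div R = x \<and> (x * R + y) mod R = y"
  by simp

lemma lt_mult_bound: "x < (A::nat) \<Longrightarrow> y < R \<Longrightarrow> x * R + y < A * R"
proof -
  assume "x < A" "y < R"
  then have "x * R + y < x * R + R" by simp
  also have "\<dots> = Suc x * R" by simp
  also have "\<dots> \<le> A * R" using \<open>x < A\<close> by (intro mult_right_mono) auto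
  finally show ?thesis .
qed

lemma frob_vec_sq: "(frob a b C)\<^sup>2 = (vnorm (a * b) (vec b C))\<^sup>2"
proof -
  have "(vnorm (a * b) (vec b C))\<^sup>2 = (\<Sum>k<a * b. (vec b C k)\<^sup>2)" by (rule vnorm_sq)
  also have "\<dots> = (\<Sum>i<a. \<Sum>j<b. (vec b C (i * b + j))\<^sup>2)" by (rule sum_reindex_prod[symmetric])
  also have "\<dots> = (\<Sum>i<a. \<Sum>j<b. (C i j)\<^sup>2)"
    by (intro sum.cong refl) (simp add: vec_def dm)
  finally show ?thesis by (simp add: frob_def sum_nonneg)
qed

lemma frob_vec: "frob a b C = vnorm (a * b) (vec b C)"
proof -
  have "frob a b C \<ge> 0" by (simp add: frob_def sum_nonneg)
  moreover have "vnorm (a * b) (vec b C) \<ge> 0" by (rule vnorm_nonneg)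
  ultimately show ?thesis using frob_vec_sq[of a b C] by (simp add: power2_eq_iff_nonneg)
qed

lemma frob_unvec_diff_sq:
  "(frob a b (\<lambda>i j. unvec b u i j - C i j))\<^sup>2 = (\<Sum>k<a * b. (u k - vec b C k)\<^sup>2)"
proof -
  have "(frob a b (\<lambda>i j. unvec b u i j - C i j))\<^sup>2 = (\<Sum>i<a. \<Sum>j<b. (unvec b u i j - C i j)\<^sup>2)"
    by (simp add: frob_def sum_nonneg)
  also have "\<dots> = (\<Sum>i<a. \<Sum>j<b. (u (i * b + j) - vec b C (i * b + j))\<^sup>2)"
    by (intro sum.cong refl) (simp add: vec_def unvec_def dm)
  also have "\<dots> = (\<Sum>k<a * b. (u k - vec b C k)\<^sup>2)" by (rule sum_reindex_prod)
  finally show ?thesis .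
qed



lemma pow_split: "m \<le> M \<Longrightarrow> n \<le> N \<Longrightarrow> (2::nat) ^ (M + N - m - n) = 2 ^ (M - m) * 2 ^ (N - n)"
  by (simp add: power_add[symmetric])

lemma rearr_Y:
  assumes mn: "m \<le> M" "n \<le> N" and c: "c < 2 ^ (M + N - m - n)"
  shows "rearr M N m n (\<lambda>i j. l * kron (2^(M-m)) (2^(N-n)) A B i j + t * E i j) r c
        = l * vec (2^n) A r * vec (2^(N-n)) B c + t * rearr M N m n E r c"
proof -
  define R :: nat where "R = 2 ^ (M - m)"
  define S :: nat where "S = 2 ^ (N - n)"
  have cRS: "c < R * S" using c pow_split[OF mn] by (simp add: R_def S_def)
  have cd: "c div S < R" using cRS by (simp add: less_mult_imp_div_less)
  have S0: "S > 0" by (simp add: S_def)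
  have cm: "c mod S < S" using S0 by simp
  have n0: "(2::nat) ^ n > 0" by simp
  show ?thesis
    unfolding rearr_def kron_def R_def[symmetric] S_def[symmetric]
    using dm[OF cd, of "r div 2 ^ n"] dm[OF cm, of "r mod 2 ^ n"]
    by (simp add: vec_def)
qed

definition phiI :: "nat \<Rightarrow> nat \<Rightarrow> nat \<Rightarrow> nat \<Rightarrow> nat \<times> nat \<Rightarrow> nat \<times> nat" where
  "phiI M N m n rc = ((fst rc div 2^n) * 2^(M-m) + snd rc div 2^(N-n),
                     (fst rc mod 2^n) * 2^(N-n) + snd rc mod 2^(N-n))"

lemma rearr_phiI: "rearr M N m n C r c = C (fst (phiI M N m n (r, c))) (snd (phiI M N m n (r, c)))"
  by (simp add: rearr_def phiI_def)

lemma phiI_inj: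
  assumes mn: "m \<le> M" "n \<le> N"
  shows "inj_on (phiI M N m n) ({..<2^(m+n)} \<times> {..<2^(M+N-m-n)})"
proof (rule inj_onI, clarify)
  fix r c r' c'
  assume c: "c < 2^(M+N-m-n)" and c': "c' < 2^(M+N-m-n)"
    and eq: "phiI M N m n (r, c) = phiI M N m n (r', c')"
  define R :: nat where "R = 2 ^ (M - m)"
  define S :: nat where "S = 2 ^ (N - n)"
  define W :: nat where "W = 2 ^ n"
  have S0: "S > 0" and W0: "W > 0" by (simp_all add: S_def W_def)
  have cd: "c div S < R" "c' div S < R" using c c' pow_split[OF mn]
    by (simp_all add: R_def S_def less_mult_imp_div_less)
  have cm: "c mod S < S" "c' mod S < S" using S0 by simp_all
  have e1: "(r div W) * R + c div S = (r' div W) * R + c' div S"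
    and e2: "(r mod W) * S + c mod S = (r' mod W) * S + c' mod S"
    using eq by (simp_all add: phiI_def R_def S_def W_def)
  have "r div W = r' div W" "c div S = c' div S"
    using dm[OF cd(1), of "r div W"] dm[OF cd(2), of "r' div W"] e1 by metis+
  moreover have "r mod W = r' mod W" "c mod S = c' mod S"
    using dm[OF cm(1), of "r mod W"] dm[OF cm(2), of "r' mod W"] e2 by metis+
  ultimately show "r = r' \<and> c = c'" by (metis div_mult_mod_eq)
qed

lemma phiI_range:
  assumes mn: "m \<le> M" "n \<le> N"
  shows "phiI M N m n ` ({..<2^(m+n)} \<times> {..<2^(M+N-m-n)}) \<subseteq> {..<2^M} \<times> {..<2^N}"
proof
  fix y assume "y \<in> phiI M N m n ` ({..<2^(m+n)} \<times> {..<2^(M+N-m-n)})"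
  then obtain r c where r: "r < 2^(m+n)" and c: "c < 2^(M+N-m-n)" and y: "y = phiI M N m n (r, c)"
    by auto
  define R :: nat where "R = 2 ^ (M - m)"
  define S :: nat where "S = 2 ^ (N - n)"
  define W :: nat where "W = 2 ^ n"
  have S0: "S > 0" and W0: "W > 0" by (simp_all add: S_def W_def)
  have cd: "c div S < R" using c pow_split[OF mn] by (simp add: R_def S_def less_mult_imp_div_less)
  have rd: "r div W < 2 ^ m" using r by (simp add: W_def power_add less_mult_imp_div_less)
  have "(r div W) * R + c div S < 2 ^ m * R" by (rule lt_mult_bound[OF rd cd])
  also have "2 ^ m * R = 2 ^ M" using mn by (simp add: R_def power_add[symmetric])
  finally have 1: "(r div W) * R + c div S < 2 ^ M" .
  have "(r mod W) * S + c mod S < W * S" using W0 S0 by (intro lt_mult_bound) auto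
  also have "W * S = 2 ^ N" using mn by (simp add: W_def S_def power_add[symmetric])
  finally have 2: "(r mod W) * S + c mod S < 2 ^ N" .
  show "y \<in> {..<2 ^ M} \<times> {..<2 ^ N}"
    using 1 2 by (simp add: y phiI_def R_def S_def W_def)
qed

lemma rearr_gauss:
  fixes E :: "'w \<Rightarrow> rmat"
  assumes P: "prob_space P" and mn: "m \<le> M" "n \<le> N"
    and En: "\<And>i j. i < 2 ^ M \<Longrightarrow> j < 2 ^ N \<Longrightarrow>
                  distributed P lborel (\<lambda>\<omega>. E \<omega> i j) (\<lambda>x. ennreal (std_normal_density x))"
    and Ei: "prob_space.indep_vars P (\<lambda>_. borel) (\<lambda>ij \<omega>. E \<omega> (fst ij) (snd ij))
                  ({..<2 ^ M} \<times> {..<2 ^ N})"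
    and nz: "vnorm (2^(m+n)) x * vnorm (2^(M+N-m-n)) w \<noteq> 0"
  shows "distributed P lborel (\<lambda>\<omega>. bil (2^(m+n)) (2^(M+N-m-n)) (rearr M N m n (E \<omega>)) x w)
           (\<lambda>t. ennreal (normal_density 0 (vnorm (2^(m+n)) x * vnorm (2^(M+N-m-n)) w) t))"
proof -
  define p :: nat where "p = 2^(m+n)"
  define q :: nat where "q = 2^(M+N-m-n)"
  define J where "J = {..<p} \<times> {..<q}"
  define cf where "cf j = x (fst j) * w (snd j)" for j
  define X where "X ij \<omega> = E \<omega> (fst ij) (snd ij)" for ij and \<omega>
  have xnz: "\<exists>r<p. x r \<noteq> 0"
  proof (rule ccontr)
    assume "\<not> ?thesis"
    then have "vnorm p x = 0" by (simp add: vnorm_def)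
    then show False using nz by (simp add: p_def q_def)
  qed
  have wnz: "\<exists>c<q. w c \<noteq> 0"
  proof (rule ccontr)
    assume "\<not> ?thesis"
    then have "vnorm q w = 0" by (simp add: vnorm_def)
    then show False using nz by (simp add: p_def q_def)
  qed
  have nzJ: "\<exists>j\<in>J. cf j \<noteq> 0" using xnz wnz by (auto simp: J_def cf_def)
  have D: "distributed P lborel (\<lambda>\<omega>. \<Sum>j\<in>J. cf j * X (phiI M N m n j) \<omega>)
           (\<lambda>t. ennreal (normal_density 0 (sqrt (\<Sum>j\<in>J. (cf j)\<^sup>2)) t))"
  proof (rule lincomb_normal[OF P])
    show "finite J" by (simp add: J_def)
    show "inj_on (phiI M N m n) J" unfolding J_def p_def q_def by (rule phiI_inj[OF mn])
    show "phiI M N m n ` J \<subseteq> {..<2 ^ M} \<times> {..<2 ^ N}" unfolding J_def p_def q_def by (rule phiI_range[OF mn])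
    show "prob_space.indep_vars P (\<lambda>_. borel) X ({..<2 ^ M} \<times> {..<2 ^ N})" using Ei by (simp add: X_def[abs_def])
    show "\<And>i. i \<in> {..<2 ^ M} \<times> {..<2 ^ N} \<Longrightarrow> distributed P lborel (X i) (\<lambda>x. ennreal (std_normal_density x))"
      using En by (auto simp: X_def[abs_def])
  qed (rule nzJ)
  have e1: "(\<lambda>\<omega>. \<Sum>j\<in>J. cf j * X (phiI M N m n j) \<omega>) = (\<lambda>\<omega>. bil p q (rearr M N m n (E \<omega>)) x w)"
  proof
    fix \<omega>
    have "bil p q (rearr M N m n (E \<omega>)) x w = (\<Sum>r<p. \<Sum>c<q. cf (r, c) * X (phiI M N m n (r, c)) \<omega>)"
      unfolding bil_def by (intro sum.cong refl) (simp add: cf_def X_def rearr_phiI)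
    also have "\<dots> = (\<Sum>j\<in>J. cf j * X (phiI M N m n j) \<omega>)"
      unfolding J_def by (rule sum.cartesian_product'[symmetric])
    finally show "(\<Sum>j\<in>J. cf j * X (phiI M N m n j) \<omega>) = bil p q (rearr M N m n (E \<omega>)) x w" by simp
  qed
  have e2: "sqrt (\<Sum>j\<in>J. (cf j)\<^sup>2) = vnorm p x * vnorm q w"
  proof -
    have "(\<Sum>j\<in>J. (cf j)\<^sup>2) = (\<Sum>r<p. \<Sum>c<q. (x r)\<^sup>2 * (w c)\<^sup>2)"
      unfolding J_def cf_def by (simp add: sum.cartesian_product' power_mult_distrib)
    also have "\<dots> = (\<Sum>r<p. (x r)\<^sup>2) * (\<Sum>c<q. (w c)\<^sup>2)" by (rule sum_product[symmetric])
    finally show ?thesis by (simp add: vnorm_def real_sqrt_mult)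
  qed
  show ?thesis using D unfolding e1 e2 p_def q_def .
qed



lemma sqrt_pow2: "sqrt (real ((2::nat) ^ j)) = 2 powr (real j / 2)"
proof -
  have "(2::real) powr (real j / 2) = sqrt (2 powr real j)" by (rule powr_half_sqrt_powr) simp
  also have "(2::real) powr real j = 2 ^ j" by (rule powr_realpow) simp
  finally show ?thesis by simp
qed

lemma tau_bound:
  assumes mn: "m \<le> MM" "n \<le> NN" and s: "\<sigma> > 0"
  shows "\<sigma> * 2 powr (- real (MM + NN) / 2) * sqrt (real ((2::nat)^(m+n) + 2^(MM+NN-m-n)))
         \<le> \<sigma> * (2 powr (- real (m + n) / 2) + 2 powr (- real ((MM - m) + (NN - n)) / 2))"
proof -
  define s1 where "s1 = m + n"
  define s2 where "s2 = (MM - m) + (NN - n)"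
  have T: "MM + NN = s1 + s2" "MM + NN - m - n = s2" using mn by (simp_all add: s1_def s2_def)
  have "sqrt (real ((2::nat)^s1 + 2^s2)) \<le> sqrt (real ((2::nat)^s1)) + sqrt (real ((2::nat)^s2))"
    unfolding of_nat_add by (rule sqrt_add_le_add_sqrt) auto
  also have "\<dots> = 2 powr (real s1 / 2) + 2 powr (real s2 / 2)" by (simp only: sqrt_pow2)
  finally have sq: "sqrt (real ((2::nat)^s1 + 2^s2)) \<le> 2 powr (real s1 / 2) + 2 powr (real s2 / 2)" .
  have "2 powr (- real (s1 + s2) / 2) * (2 powr (real s1 / 2) + 2 powr (real s2 / 2))
        = 2 powr (- real (s1 + s2) / 2 + real s1 / 2) + 2 powr (- real (s1 + s2) / 2 + real s2 / 2)"
    by (simp add: powr_add distrib_left)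
  also have "\<dots> = 2 powr (- real s2 / 2) + 2 powr (- real s1 / 2)"
    by (simp add: field_simps)
  finally have eq: "2 powr (- real (s1 + s2) / 2) * (2 powr (real s1 / 2) + 2 powr (real s2 / 2))
        = 2 powr (- real s1 / 2) + 2 powr (- real s2 / 2)" by simp
  have "\<sigma> * 2 powr (- real (s1 + s2) / 2) * sqrt (real ((2::nat)^s1 + 2^s2))
        \<le> \<sigma> * 2 powr (- real (s1 + s2) / 2) * (2 powr (real s1 / 2) + 2 powr (real s2 / 2))"
    using s by (intro mult_left_mono sq) auto
  also have "\<dots> = \<sigma> * (2 powr (- real s1 / 2) + 2 powr (- real s2 / 2))"
    using eq by (simp add: mult.assoc)
  finally show ?thesis unfolding T by (simp add: s1_def s2_def)
qed

lemma bil_scale_mat: "bil p q (\<lambda>r c. t * C r c) x w = t * bil p q C x w"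
  unfolding bil_def by (simp add: sum_distrib_left mult.assoc mult.left_commute)



theorem theorem1:
  fixes P :: "'w measure"
    and M N m0 n0 :: "nat \<Rightarrow> nat"
    and lam sigma :: "nat \<Rightarrow> real"
    and A B :: "nat \<Rightarrow> rmat"
    and E :: "nat \<Rightarrow> 'w \<Rightarrow> rmat"
    and Y :: "nat \<Rightarrow> 'w \<Rightarrow> rmat"
    and lamhat :: "nat \<Rightarrow> 'w \<Rightarrow> real"
    and u v :: "nat \<Rightarrow> 'w \<Rightarrow> rvec"
    and Ahat Bhat :: "nat \<Rightarrow> 'w \<Rightarrow> rmat"
  assumes P: "prob_space P"
    and dims: "\<And>k. m0 k \<le> M k \<and> n0 k \<le> N k"
    and lam_pos: "\<And>k. lam k > 0"
    and sigma_pos: "\<And>k. sigma k > 0"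
    and A_norm: "\<And>k. frob (2 ^ m0 k) (2 ^ n0 k) (A k) = 1"
    and B_norm: "\<And>k. frob (2 ^ (M k - m0 k)) (2 ^ (N k - n0 k)) (B k) = 1"
    and MN_inf: "filterlim (\<lambda>k. M k + N k) at_top sequentially"
    and asm1a: "filterlim (\<lambda>k. real (m0 k + n0 k) / ln (ln (real (M k * N k)))) at_top sequentially"
    and asm1b: "filterlim (\<lambda>k. real ((M k - m0 k) + (N k - n0 k)) / ln (ln (real (M k * N k))))
                  at_top sequentially"
    and E_normal: "\<And>k i j. i < 2 ^ M k \<Longrightarrow> j < 2 ^ N k \<Longrightarrow>
                  distributed P lborel (\<lambda>\<omega>. E k \<omega> i j) (\<lambda>x. ennreal (std_normal_density x))"
    and E_indep: "\<And>k. prob_space.indep_vars P (\<lambda>_. borel) (\<lambda>ij \<omega>. E k \<omega> (fst ij) (snd ij))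
                  ({..<2 ^ M k} \<times> {..<2 ^ N k})"
    and Y_def: "\<And>k \<omega>. Y k \<omega> = (\<lambda>i j. lam k * kron (2 ^ (M k - m0 k)) (2 ^ (N k - n0 k)) (A k) (B k) i j
                  + sigma k * 2 powr (- real (M k + N k) / 2) * E k \<omega> i j)"
    and lamhat_def: "\<And>k \<omega>. lamhat k \<omega> = spec_norm (2 ^ (m0 k + n0 k)) (2 ^ (M k + N k - m0 k - n0 k))
                  (rearr (M k) (N k) (m0 k) (n0 k) (Y k \<omega>))"
    and uv_lead: "\<And>k \<omega>. \<omega> \<in> space P \<Longrightarrow>
                  leading_sv_pair (2 ^ (m0 k + n0 k)) (2 ^ (M k + N k - m0 k - n0 k))
                    (rearr (M k) (N k) (m0 k) (n0 k) (Y k \<omega>)) (u k \<omega>) (v k \<omega>)"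
    and uv_sign: "\<And>k \<omega>. \<omega> \<in> space P \<Longrightarrow>
                  vinner (2 ^ (m0 k + n0 k)) (u k \<omega>) (vec (2 ^ n0 k) (A k)) \<ge> 0"
    and Ahat_def: "\<And>k \<omega>. Ahat k \<omega> = unvec (2 ^ n0 k) (u k \<omega>)"
    and Bhat_def: "\<And>k \<omega>. Bhat k \<omega> = unvec (2 ^ (N k - n0 k)) (v k \<omega>)"
  defines "r0 \<equiv> \<lambda>k. 2 powr (- real (m0 k + n0 k) / 2)
                     + 2 powr (- real ((M k - m0 k) + (N k - n0 k)) / 2)"
  shows "bigOp P (\<lambda>k \<omega>. (lamhat k \<omega> - lam k) / lam k) (\<lambda>k. r0 k / (lam k / sigma k)) \<and>
         bigOp P (\<lambda>k \<omega>. (frob (2 ^ m0 k) (2 ^ n0 k) (\<lambda>i j. Ahat k \<omega> i j - A k i j))\<^sup>2)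
           (\<lambda>k. r0 k / (lam k / sigma k)) \<and>
         bigOp P (\<lambda>k \<omega>. (frob (2 ^ (M k - m0 k)) (2 ^ (N k - n0 k)) (\<lambda>i j. Bhat k \<omega> i j - B k i j))\<^sup>2)
           (\<lambda>k. r0 k / (lam k / sigma k))"
proof -
  interpret prob_space P by (rule P)
  define C where "C \<epsilon> = 32 * Dconst \<epsilon>" for \<epsilon>
  have master: "\<exists>S\<in>sets P. measure P S \<ge> 1 - \<epsilon> \<and> (\<forall>\<omega>\<in>S.
      \<bar>(lamhat k \<omega> - lam k) / lam k\<bar> \<le> C \<epsilon> * (r0 k / (lam k / sigma k)) \<and>
      \<bar>(frob (2 ^ m0 k) (2 ^ n0 k) (\<lambda>i j. Ahat k \<omega> i j - A k i j))\<^sup>2\<bar> \<le> C \<epsilon> * (r0 k / (lam k / sigma k)) \<and>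
      \<bar>(frob (2 ^ (M k - m0 k)) (2 ^ (N k - n0 k)) (\<lambda>i j. Bhat k \<omega> i j - B k i j))\<^sup>2\<bar> \<le> C \<epsilon> * (r0 k / (lam k / sigma k)))"
    if e: "\<epsilon> > 0" for \<epsilon> k
  proof -
    define m where "m = m0 k"
    define n where "n = n0 k"
    define MM where "MM = M k"
    define NN where "NN = N k"
    define p :: nat where "p = 2 ^ (m + n)"
    define q :: nat where "q = 2 ^ (MM + NN - m - n)"
    define \<tau> where "\<tau> = sigma k * 2 powr (- real (MM + NN) / 2)"
    define G where "G \<omega> = rearr MM NN m n (E k \<omega>)" for \<omega>
    define a where "a = vec (2 ^ n) (A k)"
    define b where "b = vec (2 ^ (NN - n)) (B k)"
    define D where "D = Dconst \<epsilon>"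
    define z where "z = \<tau> * (4 * (D * sqrt (real (p + q))))"
    have mn: "m \<le> MM" "n \<le> NN" using dims[of k] by (simp_all add: m_def n_def MM_def NN_def)
    have p1: "p \<ge> 1" and q1: "q \<ge> 1" by (simp_all add: p_def q_def)
    have tau0: "\<tau> \<ge> 0" using sigma_pos[of k] by (simp add: \<tau>_def)
    have Gd: "distributed P lborel (\<lambda>\<omega>. bil p q (G \<omega>) x w) (\<lambda>t. ennreal (normal_density 0 (vnorm p x * vnorm q w) t))"
      if "vnorm p x * vnorm q w \<noteq> 0" for x w
      unfolding p_def q_def G_def
      by (rule rearr_gauss[OF P mn]) (use E_normal E_indep that in \<open>simp_all add: MM_def NN_def p_def q_def\<close>)
    obtain S where Sm: "S \<in> sets P" and mS: "measure P S \<ge> 1 - \<epsilon>"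
      and Sb: "\<And>\<omega> x w. \<omega> \<in> S \<Longrightarrow> \<bar>bil p q (G \<omega>) x w\<bar> \<le> 4 * (D * sqrt (real (p + q))) * vnorm p x * vnorm q w"
      using gauss_bilin_event[OF P p1 q1 Gd e] unfolding D_def by blast
    have a1: "vnorm p a = 1"
      using A_norm[of k] frob_vec[of "2 ^ m" "2 ^ n" "A k"] by (simp add: a_def p_def m_def n_def power_add)
    have b1: "vnorm q b = 1"
      using B_norm[of k] frob_vec[of "2 ^ (MM - m)" "2 ^ (NN - n)" "B k"] pow_split[OF mn]
      by (simp add: b_def q_def m_def n_def MM_def NN_def)
    have zb: "z \<le> 4 * D * (sigma k * r0 k)"
    proof -
      have "\<tau> * sqrt (real (p + q)) \<le> sigma k * r0 k"
        using tau_bound[OF mn sigma_pos[of k]]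
        by (simp add: \<tau>_def p_def q_def r0_def m_def n_def MM_def NN_def)
      moreover have "D \<ge> 0" using e by (simp add: D_def Dconst_def)
      ultimately have "4 * D * (\<tau> * sqrt (real (p + q))) \<le> 4 * D * (sigma k * r0 k)"
        by (intro mult_left_mono) auto
      then show ?thesis by (simp add: z_def mult_ac)
    qed
    have fin: "\<bar>(lamhat k \<omega> - lam k) / lam k\<bar> \<le> C \<epsilon> * (r0 k / (lam k / sigma k)) \<and>
      \<bar>(frob (2 ^ m0 k) (2 ^ n0 k) (\<lambda>i j. Ahat k \<omega> i j - A k i j))\<^sup>2\<bar> \<le> C \<epsilon> * (r0 k / (lam k / sigma k)) \<and>
      \<bar>(frob (2 ^ (M k - m0 k)) (2 ^ (N k - n0 k)) (\<lambda>i j. Bhat k \<omega> i j - B k i j))\<^sup>2\<bar> \<le> C \<epsilon> * (r0 k / (lam k / sigma k))"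
      if \<omega>S: "\<omega> \<in> S" for \<omega>
    proof -
      have \<omega>: "\<omega> \<in> space P" using Sm \<omega>S sets.sets_into_space by blast
      define R where "R = rearr MM NN m n (Y k \<omega>)"
      have Rf: "\<forall>r<p. \<forall>c<q. R r c = lam k * a r * b c + (\<lambda>r c. \<tau> * G \<omega> r c) r c"
      proof (intro allI impI)
        fix r c assume "r < p" "c < q"
        then have c: "c < 2 ^ (MM + NN - m - n)" by (simp add: q_def)
        show "R r c = lam k * a r * b c + (\<lambda>r c. \<tau> * G \<omega> r c) r c"
          unfolding R_def Y_def
          using rearr_Y[OF mn c, of "lam k" "A k" "B k" "sigma k * 2 powr (- real (M k + N k) / 2)" "E k \<omega>" r]
          by (simp add: a_def b_def G_def \<tau>_def m_def n_def MM_def NN_def mult.assoc)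
      qed
      have Zb: "\<bar>bil p q (\<lambda>r c. \<tau> * G \<omega> r c) x w\<bar> \<le> z * vnorm p x * vnorm q w" for x w
      proof -
        have "\<bar>bil p q (\<lambda>r c. \<tau> * G \<omega> r c) x w\<bar> = \<tau> * \<bar>bil p q (G \<omega>) x w\<bar>"
          using tau0 by (simp add: bil_scale_mat abs_mult)
        also have "\<dots> \<le> \<tau> * (4 * (D * sqrt (real (p + q))) * vnorm p x * vnorm q w)"
          using Sb[OF \<omega>S] tau0 by (intro mult_left_mono) auto
        finally show ?thesis by (simp add: z_def mult_ac)
      qed
      have lead: "leading_sv_pair p q R (u k \<omega>) (v k \<omega>)"
        using uv_lead[OF \<omega>] by (simp add: R_def p_def q_def m_def n_def MM_def NN_def)
      have sgn: "vinner p (u k \<omega>) a \<ge> 0"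
        using uv_sign[OF \<omega>] by (simp add: a_def p_def m_def n_def)
      note pt = perturb[OF Rf a1 b1 Zb lead sgn lam_pos[of k]]
      have lam0: "lam k > 0" by (rule lam_pos)
      have z0: "z \<ge> 0" using tau0 e by (simp add: z_def D_def Dconst_def)
      have key: "8 * z / lam k \<le> C \<epsilon> * (r0 k / (lam k / sigma k))"
      proof -
        have "8 * z / lam k \<le> 8 * (4 * D * (sigma k * r0 k)) / lam k"
          using zb lam0 by (intro divide_right_mono) (auto simp: mult_ac)
        also have "\<dots> = C \<epsilon> * (r0 k / (lam k / sigma k))"
          using lam0 sigma_pos[of k] by (simp add: C_def D_def field_simps)
        finally show ?thesis .
      qed
      have "\<bar>(lamhat k \<omega> - lam k) / lam k\<bar> \<le> z / lam k"
        using pt(1) lam0 by (simp add: lamhat_def R_def p_def q_def m_def n_def MM_def NN_def divide_right_mono)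
      also have "\<dots> \<le> 8 * z / lam k" using z0 lam0 by (simp add: divide_right_mono)
      finally have X1: "\<bar>(lamhat k \<omega> - lam k) / lam k\<bar> \<le> C \<epsilon> * (r0 k / (lam k / sigma k))"
        using key by linarith
      have "(frob (2 ^ m0 k) (2 ^ n0 k) (\<lambda>i j. Ahat k \<omega> i j - A k i j))\<^sup>2 = (\<Sum>i<p. (u k \<omega> i - a i)\<^sup>2)"
        using frob_unvec_diff_sq[of "2 ^ m" "2 ^ n" "u k \<omega>" "A k"]
        by (simp add: Ahat_def a_def p_def m_def n_def power_add)
      then have X2: "\<bar>(frob (2 ^ m0 k) (2 ^ n0 k) (\<lambda>i j. Ahat k \<omega> i j - A k i j))\<^sup>2\<bar> \<le> C \<epsilon> * (r0 k / (lam k / sigma k))"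
        unfolding abs_power2 using pt(2) key by linarith
      have "(frob (2 ^ (M k - m0 k)) (2 ^ (N k - n0 k)) (\<lambda>i j. Bhat k \<omega> i j - B k i j))\<^sup>2 = (\<Sum>j<q. (v k \<omega> j - b j)\<^sup>2)"
        using frob_unvec_diff_sq[of "2 ^ (MM - m)" "2 ^ (NN - n)" "v k \<omega>" "B k"] pow_split[OF mn]
        by (simp add: Bhat_def b_def q_def m_def n_def MM_def NN_def)
      then have X3: "\<bar>(frob (2 ^ (M k - m0 k)) (2 ^ (N k - n0 k)) (\<lambda>i j. Bhat k \<omega> i j - B k i j))\<^sup>2\<bar> \<le> C \<epsilon> * (r0 k / (lam k / sigma k))"
        unfolding abs_power2 using pt(3) key by linarith
      show ?thesis using X1 X2 X3 by blast
    qed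
    show ?thesis using Sm mS fin by blast
  qed
  show ?thesis
    unfolding bigOp_def
  proof (intro conjI allI impI)
    fix \<epsilon> :: real assume e: "\<epsilon> > 0"
    show "\<exists>C K. \<forall>k\<ge>K. \<exists>S\<in>sets P. 1 - \<epsilon> \<le> measure P S \<and> (\<forall>\<omega>\<in>S. \<bar>(lamhat k \<omega> - lam k) / lam k\<bar> \<le> C * (r0 k / (lam k / sigma k)))"
      using master[OF e] by (intro exI[of _ "C \<epsilon>"] exI[of _ 0]) blast
  next
    fix \<epsilon> :: real assume e: "\<epsilon> > 0"
    show "\<exists>C K. \<forall>k\<ge>K. \<exists>S\<in>sets P. 1 - \<epsilon> \<le> measure P S \<and> (\<forall>\<omega>\<in>S. \<bar>(frob (2 ^ m0 k) (2 ^ n0 k) (\<lambda>i j. Ahat k \<omega> i j - A k i j))\<^sup>2\<bar> \<le> C * (r0 k / (lam k / sigma k)))"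
      using master[OF e] by (intro exI[of _ "C \<epsilon>"] exI[of _ 0]) blast
  next
    fix \<epsilon> :: real assume e: "\<epsilon> > 0"
    show "\<exists>C K. \<forall>k\<ge>K. \<exists>S\<in>sets P. 1 - \<epsilon> \<le> measure P S \<and> (\<forall>\<omega>\<in>S. \<bar>(frob (2 ^ (M k - m0 k)) (2 ^ (N k - n0 k)) (\<lambda>i j. Bhat k \<omega> i j - B k i j))\<^sup>2\<bar> \<le> C * (r0 k / (lam k / sigma k)))"
      using master[OF e] by (intro exI[of _ "C \<epsilon>"] exI[of _ 0]) blast
  qed
qed

end
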